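(* Let $\mu>0$, $k>0$, $y(x)=-k(1-x)$, and let $x_l$, $m(x)$ and $N(x,\xi)$ be as in the context. Then $\partial_\xi N(x,\xi)>0$ for every $x\in(x_l,1)$ and every $\xi\in(0,1)$.
   Context: Let $g(u)=u^2(1-u)$ and $G(u)=u^3/3-u^4/4$ for $u\in[0,1]$. Let $x_l\in(0,1)$ be the abscissa of the unique intersection in $(0,1)$ of the line $v=y(u)$ with the curve $v^2=2\mu G(u)$, $v<0$. For $x\in(x_l,1)$, $m(x)\in(0,x)$ is the unique number with $2\mu G(m(x))=2\mu G(x)-y(x)^2$; $m$ is $\mathcal{C}^1$. Define, for $x\in(x_l,1)$ and $\xi\in[0,1]$, writing $z=x-(x-m(x))\xi$, $$N(x,\xi)=(1-m'(x))\bigl(y(x)^2+2\mu(G(z)-G(x))\bigr)-(x-m(x))\Bigl(y(x)y'(x)+\mu\bigl(g(z)\,(1-(1-m'(x))\xi)-g(x)\bigr)\Bigr).$$ *)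

theory Defs
  imports "HOL-Analysis.Analysis"
begin

definition gA :: "real \<Rightarrow> real" where
  "gA u = u^2 * (1 - u)"

definition GA :: "real \<Rightarrow> real" where
  "GA u = u^3 / 3 - u^4 / 4"

definition yA :: "real \<Rightarrow> real \<Rightarrow> real" where
  "yA k u = - k * (1 - u)"

definition xlA :: "real \<Rightarrow> real \<Rightarrow> real" where
  "xlA mu k = (THE u. 0 < u \<and> u < 1 \<and> yA k u < 0 \<and> (yA k u)^2 = 2 * mu * GA u)"

definition mA :: "real \<Rightarrow> real \<Rightarrow> real \<Rightarrow> real" where
  "mA mu k x = (THE z. 0 < z \<and> z < x \<and> 2 * mu * GA z = 2 * mu * GA x - (yA k x)^2)"

definition NA :: "real \<Rightarrow> real \<Rightarrow> real \<Rightarrow> real \<Rightarrow> real" where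
  "NA mu k x \<xi> =
    (let m = mA mu k x; m' = deriv (mA mu k) x; z = x - (x - m) * \<xi>
     in (1 - m') * ((yA k x)^2 + 2 * mu * (GA z - GA x))
        - (x - m) * (yA k x * deriv (yA k) x
                     + mu * (gA z * (1 - (1 - m') * \<xi>) - gA x)))"

end

theory Submission imports Defs begin

lemma polypos0:
  fixes m r q p :: real
  assumes "m > 0" "r > 0" "q > 0" "p > 0" "m + r + q + p = 1"
  shows "p * ((m^2*(1-m)) * (r+q) * (2*(m+r) - 3*(m+r)^2))
     + (p * ((m+r+q)^2*(1-(m+r+q)) - m^2*(1-m)) + 2*(((m+r+q)^3/3 - (m+r+q)^4/4) - (m^3/3 - m^4/4)))
       * ((m+r)^2*(1-(m+r)) + q * (2*(m+r) - 3*(m+r)^2)) > 0"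
proof -
  have pos: "2*r*q^3*p^3 + (10/3)*r*q^4*p^2 + (5/3)*r*q^5*p + (1/3)*r*q^6 + 5*r^2*q^2*p^3 + (26/3)*r^2*q^3*p^2 + (11/2)*r^2*q^4*p + (4/3)*r^2*q^5 + 4*r^3*q*p^3 + 8*r^3*q^2*p^2 + (20/3)*r^3*q^3*p + 2*r^3*q^4 + 1*r^4*p^3 + (10/3)*r^4*q*p^2 + (11/3)*r^4*q^2*p + (4/3)*r^4*q^3 + (2/3)*r^5*p^2 + 1*r^5*q*p + (1/3)*r^5*q^2 + (1/6)*r^6*p + 2*m*q^3*p^3 + (10/3)*m*q^4*p^2 + (5/3)*m*q^5*p + (1/3)*m*q^6 + 10*m*r*q^2*p^3 + (52/3)*m*r*q^3*p^2 + 11*m*r*q^4*p + (8/3)*m*r*q^5 + 12*m*r^2*q*p^3 + 24*m*r^2*q^2*p^2 + 20*m*r^2*q^3*p + 6*m*r^2*q^4 + 4*m*r^3*p^3 + (40/3)*m*r^3*q*p^2 + (44/3)*m*r^3*q^2*p + (16/3)*m*r^3*q^3 + (10/3)*m*r^4*p^2 + 5*m*r^4*q*p + (5/3)*m*r^4*q^2 + 1*m*r^5*p + 5*m^2*q^2*p^3 + (26/3)*m^2*q^3*p^2 + (11/2)*m^2*q^4*p + (4/3)*m^2*q^5 + 12*m^2*r*q*p^3 + 24*m^2*r*q^2*p^2 + 20*m^2*r*q^3*p + 6*m^2*r*q^4 + 7*m^2*r^2*p^3 + 22*m^2*r^2*q*p^2 + 23*m^2*r^2*q^2*p + 8*m^2*r^2*q^3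 + (20/3)*m^2*r^3*p^2 + 10*m^2*r^3*q*p + (10/3)*m^2*r^3*q^2 + (3/2)*m^2*r^4*p + 4*m^3*q*p^3 + 8*m^3*q^2*p^2 + (20/3)*m^3*q^3*p + 2*m^3*q^4 + 4*m^3*r*p^3 + 12*m^3*r*q*p^2 + 12*m^3*r*q^2*p + 4*m^3*r*q^3 + 4*m^3*r^2*p^2 + 6*m^3*r^2*q*p + 2*m^3*r^2*q^2 + (2/3)*m^3*r^3*p > 0"
    by (intro add_pos_pos mult_pos_pos divide_pos_pos zero_less_power; simp add: assms)
  have "2*r*q^3*p^3 + (10/3)*r*q^4*p^2 + (5/3)*r*q^5*p + (1/3)*r*q^6 + 5*r^2*q^2*p^3 + (26/3)*r^2*q^3*p^2 + (11/2)*r^2*q^4*p + (4/3)*r^2*q^5 + 4*r^3*q*p^3 + 8*r^3*q^2*p^2 + (20/3)*r^3*q^3*p + 2*r^3*q^4 + 1*r^4*p^3 + (10/3)*r^4*q*p^2 + (11/3)*r^4*q^2*p + (4/3)*r^4*q^3 + (2/3)*r^5*p^2 + 1*r^5*q*p + (1/3)*r^5*q^2 + (1/6)*r^6*p + 2*m*q^3*p^3 + (10/3)*m*q^4*p^2 + (5/3)*m*q^5*p + (1/3)*m*q^6 + 10*m*r*q^2*p^3 + (52/3)*m*r*q^3*p^2 + 11*m*r*q^4*p + (8/3)*m*r*q^5 + 12*m*r^2*q*p^3 + 24*m*r^2*q^2*p^2 + 20*m*r^2*q^3*p + 6*m*r^2*q^4 + 4*m*r^3*p^3 + (40/3)*m*r^3*q*p^2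 + (44/3)*m*r^3*q^2*p + (16/3)*m*r^3*q^3 + (10/3)*m*r^4*p^2 + 5*m*r^4*q*p + (5/3)*m*r^4*q^2 + 1*m*r^5*p + 5*m^2*q^2*p^3 + (26/3)*m^2*q^3*p^2 + (11/2)*m^2*q^4*p + (4/3)*m^2*q^5 + 12*m^2*r*q*p^3 + 24*m^2*r*q^2*p^2 + 20*m^2*r*q^3*p + 6*m^2*r*q^4 + 7*m^2*r^2*p^3 + 22*m^2*r^2*q*p^2 + 23*m^2*r^2*q^2*p + 8*m^2*r^2*q^3 + (20/3)*m^2*r^3*p^2 + 10*m^2*r^3*q*p + (10/3)*m^2*r^3*q^2 + (3/2)*m^2*r^4*p + 4*m^3*q*p^3 + 8*m^3*q^2*p^2 + (20/3)*m^3*q^3*p + 2*m^3*q^4 + 4*m^3*r*p^3 + 12*m^3*r*q*p^2 + 12*m^3*r*q^2*p + 4*m^3*r*q^3 + 4*m^3*r^2*p^2 + 6*m^3*r^2*q*p + 2*m^3*r^2*q^2 + (2/3)*m^3*r^3*p = p * ((m^2*(1-m)) * (r+q) * (2*(m+r) - 3*(m+r)^2))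
     + (p * ((m+r+q)^2*(1-(m+r+q)) - m^2*(1-m)) + 2*(((m+r+q)^3/3 - (m+r+q)^4/4) - (m^3/3 - m^4/4)))
       * ((m+r)^2*(1-(m+r)) + q * (2*(m+r) - 3*(m+r)^2))"
    using assms(5) by algebra
  with pos show ?thesis by simp
qed

lemma polypos:
  fixes m r q p :: real
  assumes "m > 0" "r > 0" "q > 0" "p > 0" "m + r + q + p = 1"
  shows "p * (gA m * (r+q) * (2*(m+r) - 3*(m+r)^2))
     + (p * (gA (m+r+q) - gA m) + 2*(GA (m+r+q) - GA m))
       * (gA (m+r) + q * (2*(m+r) - 3*(m+r)^2)) > 0"
  using polypos0[OF assms] unfolding gA_def GA_def .

lemma GA_deriv: "(GA has_real_derivative gA u) (at u)"
  unfolding GA_def gA_def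
  by (rule derivative_eq_intros refl | simp)+ (simp add: algebra_simps power2_eq_square power3_eq_cube)

lemma GA_cont: "continuous_on S GA"
  unfolding GA_def by (intro continuous_intros) auto

lemma GA_strict: 
  assumes "0 \<le> a" "a < b" "b \<le> 1"
  shows "GA a < GA b"
proof (rule DERIV_pos_imp_increasing_open[OF assms(2)])
  fix u assume "a < u" "u < b"
  then show "\<exists>y. (GA has_real_derivative y) (at u) \<and> 0 < y"
    using assms by (intro exI[of _ "gA u"] conjI GA_deriv) (auto simp: gA_def)
qed (rule GA_cont)

lemma GA_mono_iff:
  assumes "0 \<le> a" "a \<le> 1" "0 \<le> b" "b \<le> 1"
  shows "GA a < GA b \<longleftrightarrow> a < b"
  using GA_strict assms by (metis linorder_neqE_linordered_idom order_less_asym)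

lemma GA_inj:
  assumes "0 \<le> a" "a \<le> 1" "0 \<le> b" "b \<le> 1" "GA a = GA b"
  shows "a = b"
  using GA_strict assms by (metis linorder_neqE_linordered_idom order_less_irrefl)

definition Ginv :: "real \<Rightarrow> real" where
  "Ginv c = (THE u. 0 \<le> u \<and> u \<le> 1 \<and> GA u = c)"

lemma Ginv_GA: assumes "0 \<le> u" "u \<le> 1" shows "Ginv (GA u) = u"
  unfolding Ginv_def using assms GA_inj by (intro the_equality) auto

lemma GA_Ginv: assumes "0 \<le> c" "c \<le> 1/12" shows "GA (Ginv c) = c" "0 \<le> Ginv c" "Ginv c \<le> 1"
proof -
  have "\<exists>u. 0 \<le> u \<and> u \<le> 1 \<and> GA u = c"
    using IVT'[of GA 0 c 1, OF _ _ _ GA_cont] assms by (auto simp: GA_def)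
  then obtain u where u: "0 \<le> u" "u \<le> 1" "GA u = c" by blast
  then have "Ginv c = u" using Ginv_GA by blast
  then show "GA (Ginv c) = c" "0 \<le> Ginv c" "Ginv c \<le> 1" using u by auto
qed

lemma yA_sq: "(yA k u)^2 = k^2*(1-u)^2"
  by (simp add: yA_def power_mult_distrib)

lemma xl_facts:
  fixes mu k :: real
  assumes "mu > 0" "k > 0"
  shows "0 < xlA mu k" "xlA mu k < 1"
    "\<And>x. xlA mu k < x \<Longrightarrow> x \<le> 1 \<Longrightarrow> k^2*(1-x)^2 < 2*mu*GA x"
proof -
  define phi where "phi u = k^2*(1-u)^2 - 2*mu*GA u" for u
  have dec: "phi b < phi a" if "0 \<le> a" "a < b" "b \<le> 1" for a b
  proof -
    have "k^2*(1-b)^2 \<le> k^2*(1-a)^2" using that by (intro mult_left_mono power_mono) auto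
    moreover have "GA a < GA b" using GA_strict that by blast
    then have "mu * GA a < mu * GA b" using assms by simp
    ultimately show ?thesis unfolding phi_def by simp
  qed
  have "\<exists>u. 0 \<le> u \<and> u \<le> 1 \<and> - phi u = 0"
    apply (rule IVT'[of "\<lambda>u. - phi u" 0 0 1])
    using assms by (auto simp: phi_def GA_def intro!: continuous_intros)
  then obtain u0 where u0: "0 \<le> u0" "u0 \<le> 1" "phi u0 = 0" by auto
  have "u0 \<noteq> 0" using u0 assms by (auto simp: phi_def GA_def)
  moreover have "u0 \<noteq> 1" using u0 assms by (auto simp: phi_def GA_def)
  ultimately have u0': "0 < u0" "u0 < 1" using u0 by auto
  have "xlA mu k = u0"
    unfolding xlA_def
  proof (rule the_equality)
    show "0 < u0 \<and> u0 < 1 \<and> yA k u0 < 0 \<and> (yA k u0)^2 = 2*mu*GA u0"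
      using u0 u0' assms by (auto simp: yA_sq yA_def phi_def power_mult_distrib)
    fix u assume u: "0 < u \<and> u < 1 \<and> yA k u < 0 \<and> (yA k u)^2 = 2*mu*GA u"
    then have "phi u = 0" by (simp add: phi_def yA_sq)
    then show "u = u0" using dec[of u u0] dec[of u0 u] u u0 u0'
      by (metis linorder_neqE_linordered_idom less_le order_less_irrefl)
  qed
  then show "0 < xlA mu k" "xlA mu k < 1" using u0' by auto
  fix x assume "xlA mu k < x" "x \<le> 1"
  then have "phi x < phi u0" using dec[of u0 x] u0 \<open>xlA mu k = u0\<close> by auto
  then show "k^2*(1-x)^2 < 2*mu*GA x" using u0 by (simp add: phi_def)
qed

lemma m_facts:
  fixes mu k t :: real
  assumes "mu > 0" "k > 0" "xlA mu k < t" "t < 1"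
  shows "mA mu k t = Ginv (GA t - k^2*(1-t)^2/(2*mu))" "0 < mA mu k t" "mA mu k t < t"
    "GA (mA mu k t) = GA t - k^2*(1-t)^2/(2*mu)"
proof -
  define c where "c = GA t - k^2*(1-t)^2/(2*mu)"
  have t0: "0 < t" using xl_facts[OF assms(1,2)] assms by linarith
  have "k^2*(1-t)^2 < 2*mu*GA t" using xl_facts(3)[OF assms(1,2) assms(3)] assms by simp
  then have c0: "0 < c" unfolding c_def using assms by (simp add: field_simps)
  have "0 < k^2*(1-t)^2" using assms by simp
  then have cG: "c < GA t" unfolding c_def using assms by simp
  have "GA t < GA 1" using GA_strict[of t 1] t0 assms by simp
  then have c1: "c \<le> 1/12" using cG by (simp add: GA_def)
  define w where "w = Ginv c"
  have w: "GA w = c" "0 \<le> w" "w \<le> 1" using GA_Ginv[of c] c0 c1 unfolding w_def by auto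
  have "w \<noteq> 0" using w c0 by (auto simp: GA_def)
  have "w < t" using GA_mono_iff[of w t] w cG t0 assms by auto
  have eq: "2 * mu * GA z = 2 * mu * GA t - (yA k t)^2 \<longleftrightarrow> GA z = c" for z
    unfolding c_def yA_sq using assms by (auto simp: field_simps)
  have "mA mu k t = w"
    unfolding mA_def
  proof (rule the_equality)
    show "0 < w \<and> w < t \<and> 2 * mu * GA w = 2 * mu * GA t - (yA k t)^2"
      using w \<open>w \<noteq> 0\<close> \<open>w < t\<close> eq by auto
    fix z assume "0 < z \<and> z < t \<and> 2 * mu * GA z = 2 * mu * GA t - (yA k t)^2"
    then show "z = w" using eq Ginv_GA[of z] assms unfolding w_def by auto
  qed
  then show "mA mu k t = Ginv (GA t - k^2*(1-t)^2/(2*mu))" "0 < mA mu k t" "mA mu k t < t"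
     "GA (mA mu k t) = GA t - k^2*(1-t)^2/(2*mu)"
    using w_def c_def \<open>w \<noteq> 0\<close> \<open>w < t\<close> w by auto
qed


theorem lemmaA2:
  fixes mu k x \<xi> :: real
  assumes "mu > 0" and "k > 0"
    and "xlA mu k < x" and "x < 1"
    and "0 < \<xi>" and "\<xi> < 1"
  shows "\<exists>D. ((\<lambda>t. NA mu k x t) has_real_derivative D) (at \<xi>) \<and> D > 0"
proof -
  define h where "h t = GA t - k^2*(1-t)^2/(2*mu)" for t
  define m where "m = mA mu k x"
  have mx: "m = Ginv (h x)" "0 < m" "m < x" using m_facts[OF assms(1-4)] unfolding m_def h_def by auto
  have x0: "0 < x" using mx by linarith
  have hx: "h x = GA m" using m_facts(4)[OF assms(1-4)] unfolding m_def h_def by simp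
  have hder: "(h has_real_derivative (gA x + k^2*(1-x)/mu)) (at x)"
    unfolding h_def GA_def gA_def
    using assms by (auto intro!: derivative_eq_intros simp: field_simps power2_eq_square power3_eq_cube)
  have gm0: "gA m \<noteq> 0" using mx assms by (auto simp: gA_def)
  have h0: "0 < h x" "h x < 1/12"
    using hx GA_strict[of 0 m] GA_strict[of m 1] mx assms by (auto simp: GA_def)
  have cont: "isCont Ginv (h x)"
    unfolding hx
    by (rule isCont_inverse_function2[where f=GA]) (use mx assms in \<open>auto intro: Ginv_GA DERIV_isCont[OF GA_deriv]\<close>)
  have gder: "(Ginv has_real_derivative inverse (gA m)) (at (h x))"
    apply (rule DERIV_inverse_function[where f=GA and g=Ginv and x="h x" and D="gA m" and a=0 and b="1/12"])
    using GA_deriv mx gm0 h0 GA_Ginv(1) cont by auto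
  define M' where "M' = inverse (gA m) * (gA x + k^2*(1-x)/mu)"
  have "((\<lambda>t. Ginv (h t)) has_real_derivative M') (at x)"
    unfolding M'_def by (rule DERIV_chain2[OF gder hder])
  then have "(mA mu k has_real_derivative M') (at x)"
    apply (rule has_field_derivative_transform_within_open[where S="{xlA mu k<..<1}"])
    using assms m_facts(1)[OF assms(1,2)] by (auto simp: h_def)
  then have dM: "deriv (mA mu k) x = M'" by (rule DERIV_imp_deriv)
  have "yA k = (\<lambda>u. -k*(1-u))" by (rule ext) (simp add: yA_def)
  then have "(yA k has_real_derivative k) (at x)"
    by (auto intro!: derivative_eq_intros)
  then have dy: "deriv (yA k) x = k" by (rule DERIV_imp_deriv)
  define z where "z = x - (x-m)*\<xi>"
  define D where "D = mu*(x-m)*((x-m)*(2*z-3*z^2)*(1-(1-M')*\<xi>) - (1-M')*gA z)"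
  have NAe: "NA mu k x t = (1-M')*((yA k x)^2 + 2*mu*(GA (x-(x-m)*t) - GA x))
     - (x-m)*(yA k x * k + mu*(gA (x-(x-m)*t)*(1-(1-M')*t) - gA x))" for t
    by (simp add: NA_def Let_def m_def dM dy)
  have der: "((\<lambda>t. NA mu k x t) has_real_derivative D) (at \<xi>)"
    unfolding NAe GA_def gA_def D_def z_def
    apply (auto intro!: derivative_eq_intros)
    by algebra
  have rel1: "M' * gA m = gA x + k^2*(1-x)/mu" unfolding M'_def using gm0 by simp
  have rel2: "2*(GA x - GA m) = k^2*(1-x)^2/mu" using hx assms(1) unfolding h_def by (simp add: field_simps)
  define r where "r = (x-m)*(1-\<xi>)"
  define q where "q = (x-m)*\<xi>"
  define p where "p = 1 - x"
  define g' where "g' = 2*z - 3*z^2"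
  have mr: "m + r = z" unfolding r_def z_def by (simp add: algebra_simps)
  have zq: "z + q = x" unfolding q_def z_def by (simp add: algebra_simps)
  have rp: "r > 0" "q > 0" "p > 0" using mx assms unfolding r_def q_def p_def by auto
  have "p * (gA m * (r+q) * (2*(m+r) - 3*(m+r)^2))
     + (p * (gA (m+r+q) - gA m) + 2*(GA (m+r+q) - GA m))
       * (gA (m+r) + q * (2*(m+r) - 3*(m+r)^2)) > 0"
    by (rule polypos) (use mx rp in \<open>auto simp: r_def q_def p_def algebra_simps\<close>)
  then have Fpos: "p * (gA m * (r+q) * g')
     + (p * (gA x - gA m) + 2*(GA x - GA m)) * (gA z + q * g') > 0"
    unfolding g'_def by (simp only: mr zq)
  have "p*(M'-1)*gA m = p*(M'*gA m) - p*gA m" by algebra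
  also have "\<dots> = p * (gA x - gA m) + 2*(GA x - GA m)"
    unfolding rel1 rel2 p_def by (simp add: algebra_simps power2_eq_square)
  finally have Pid: "p * (gA x - gA m) + 2*(GA x - GA m) = p*(M'-1)*gA m" by simp
  define E where "E = (x-m)*(2*z-3*z^2)*(1-(1-M')*\<xi>) - (1-M')*gA z"
  have "p * (gA m * (r+q) * g') + (p * (gA x - gA m) + 2*(GA x - GA m)) * (gA z + q * g')
      = p * (gA m * (r+q) * g') + (p*(M'-1)*gA m) * (gA z + q * g')" unfolding Pid ..
  also have "\<dots> = (p * gA m) * E" unfolding r_def q_def E_def g'_def by algebra
  finally have "(p * gA m) * E > 0" using Fpos by simp
  moreover have "p * gA m > 0" using rp mx assms by (auto simp: gA_def)
  ultimately have "E > 0" using zero_less_mult_pos by blast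
  then have "D > 0" unfolding D_def using mx assms E_def by (simp add: z_def)
  with der show ?thesis by blast
qed

end
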